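(* Let $N=N_T+N_I+N_R$ and let $\mathbf{Z}\in\mathbb{C}^{N\times N}$ be invertible, partitioned into blocks indexed by $T,I,R$ of sizes $N_T,N_I,N_R$. Let $\mathbf{Z}_T\in\mathbb{C}^{N_T\times N_T}$ and $\mathbf{Z}_R\in\mathbb{C}^{N_R\times N_R}$ be invertible diagonal matrices and $\mathbf{Z}_I\in\mathbb{C}^{N_I\times N_I}$ invertible, and set $\mathbf{Z}_0=\mathrm{blkdiag}(\mathbf{Z}_T,\mathbf{Z}_I,\mathbf{Z}_R)$. Let $\mathbf{Y}=\mathbf{Z}^{-1}$ (partitioned in the same way into blocks $\mathbf{Y}_{ab}$), $\mathbf{Y}_T=\mathbf{Z}_T^{-1}$, $\mathbf{Y}_I=\mathbf{Z}_I^{-1}$, $\mathbf{Y}_R=\mathbf{Z}_R^{-1}$. Assume $\mathbf{I}+\mathbf{Z}_0\mathbf{Z}^{-1}$ is invertible and that the matrices $\mathbf{Y}_R+\mathbf{Y}_{RR}$ and $\begin{bmatrix}\mathbf{Y}_I+\mathbf{Y}_{II}&\mathbf{Y}_{IR}\\ \mathbf{Y}_{RI}&\mathbf{Y}_R+\mathbf{Y}_{RR}\end{bmatrix}$ are invertible. Let $\widetilde{\mathbf{Z}}=(\mathbf{I}+\mathbf{Z}_0\mathbf{Z}^{-1})^{-1}$ with blocks $\widetilde{\mathbf{Z}}_{ab}$. Then $\widetilde{\mathbf{Z}}_{TT}$ is invertible and $$\widetilde{\mathbf{Z}}_{RT}\widetilde{\mathbf{Z}}_{TT}^{-1}=\left(\mathbf{Y}_R+\mathbf{Y}_{RR}\right)^{-1}\Big(-\mathbf{Y}_{RT}+\mathbf{Y}_{RI}\big(\mathbf{Y}_I+\mathbf{Y}_{II}-\mathbf{Y}_{IR}(\mathbf{Y}_R+\mathbf{Y}_{RR})^{-1}\mathbf{Y}_{RI}\big)^{-1}\big(\mathbf{Y}_{IT}-\mathbf{Y}_{IR}(\mathbf{Y}_R+\mathbf{Y}_{RR})^{-1}\mathbf{Y}_{RT}\big)\Big),$$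 where the inner inverse exists.
   Context: Blocks are indexed by $T$ (first $N_T$ indices), $I$ (next $N_I$), $R$ (last $N_R$); $\mathbf{X}_{ab}$ denotes the $(a,b)$ block of a matrix $\mathbf{X}$. $\widetilde{\mathbf{Z}}_{RT}\widetilde{\mathbf{Z}}_{TT}^{-1}$ is the general physics-consistent RIS-aided MIMO channel matrix (mapping transmit to receive voltages) in multiport network theory. *)

theory Defs
  imports Complex_Main "Jordan_Normal_Form.Matrix"
begin

text \<open>Inverse of a square matrix (meaningful when the matrix is invertible).\<close>
definition minv :: "'a :: semiring_1 mat \<Rightarrow> 'a mat" where
  "minv A = (SOME B. B \<in> carrier_mat (dim_row A) (dim_row A) \<and> inverts_mat A B \<and> inverts_mat B A)"

definition blk :: "'a mat \<Rightarrow> nat \<Rightarrow> nat \<Rightarrow> nat \<Rightarrow> nat \<Rightarrow> 'a mat" where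
  "blk A r0 nr c0 nc = mat nr nc (\<lambda>(i, j). A $$ (i + r0, j + c0))"

end

theory Submission
  imports Defs "Jordan_Normal_Form.Determinant"
begin


lemma minv_props:
  fixes A :: "'a::field mat"
  assumes A: "A \<in> carrier_mat n n" and inv: "invertible_mat A"
  shows "minv A \<in> carrier_mat n n" "A * minv A = 1\<^sub>m n" "minv A * A = 1\<^sub>m n"
proof -
  from inv obtain B where AB: "A * B = 1\<^sub>m (dim_row A)" and BA: "B * A = 1\<^sub>m (dim_row B)"
    unfolding invertible_mat_def inverts_mat_def by auto
  have "dim_col B = n" using arg_cong[OF AB, of dim_col] A by simp
  moreover have "dim_row B = n" using arg_cong[OF BA, of dim_col] A by simp
  ultimately have B: "B \<in> carrier_mat n n" by auto
  have "\<exists>B. B \<in> carrier_mat (dim_row A) (dim_row A) \<and> inverts_mat A B \<and> inverts_mat B A"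
    using B AB BA A unfolding inverts_mat_def by auto
  from someI_ex[OF this] have "minv A \<in> carrier_mat n n \<and> inverts_mat A (minv A) \<and> inverts_mat (minv A) A"
    unfolding minv_def using A by auto
  then show "minv A \<in> carrier_mat n n" "A * minv A = 1\<^sub>m n" "minv A * A = 1\<^sub>m n"
    unfolding inverts_mat_def using A by auto
qed

lemma left_inv:
  fixes A :: "'a::field mat"
  assumes A: "A \<in> carrier_mat n n" and L: "L \<in> carrier_mat n n" and LA: "L * A = 1\<^sub>m n"
  shows "invertible_mat A" "minv A = L"
proof -
  have AL: "A * L = 1\<^sub>m n" using mat_mult_left_right_inverse[OF L A LA] .
  show inv: "invertible_mat A" unfolding invertible_mat_def inverts_mat_def
    using A L AL LA by (auto intro!: exI[of _ L])
  note m = minv_props[OF A inv]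
  have "minv A = minv A * (A * L)" using m(1) AL by simp
  also have "\<dots> = (minv A * A) * L" using m(1) A L by (simp add: assoc_mult_mat)
  also have "\<dots> = L" using m(3) L by simp
  finally show "minv A = L" .
qed

lemma blk_carrier[simp]: "blk A r nr c nc \<in> carrier_mat nr nc"
  unfolding blk_def by auto
lemma blk_dims[simp]: "dim_row (blk A r nr c nc) = nr" "dim_col (blk A r nr c nc) = nc"
  unfolding blk_def by auto
lemma blk_index[simp]: "i < nr \<Longrightarrow> j < nc \<Longrightarrow> blk A r nr c nc $$ (i,j) = A $$ (i + r, j + c)"
  unfolding blk_def by auto

lemma blk_add: assumes "A \<in> carrier_mat n m" "B \<in> carrier_mat n m" "r + nr \<le> n" "c + nc \<le> m"
  shows "blk (A + B) r nr c nc = blk A r nr c nc + blk B r nr c nc"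
  by (rule eq_matI, insert assms, auto)

lemma blk_one_diag: assumes "r + k \<le> n" shows "blk (1\<^sub>m n) r k r k = 1\<^sub>m k"
  by (rule eq_matI, insert assms, auto)

lemma blk_one_off: assumes "r + nr \<le> n" "c + nc \<le> n" "r + nr \<le> c \<or> c + nc \<le> r"
  shows "blk (1\<^sub>m n) r nr c nc = 0\<^sub>m nr nc"
  by (rule eq_matI, insert assms, auto)

lemma sum2: fixes g :: "nat \<Rightarrow> 'a::comm_monoid_add"
  shows "(\<Sum>k<x+y. g k) = (\<Sum>k<x. g k) + (\<Sum>k<y. g (k + x))"
  by (induct y) (simp_all add: ac_simps)

lemma sum3: fixes f :: "nat \<Rightarrow> 'a::comm_monoid_add" and a b c :: nat
  shows "(\<Sum>k<a+b+c. f k) = (\<Sum>k<a. f k) + (\<Sum>k<b. f (k + a)) + (\<Sum>k<c. f (k + (a+b)))"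
  using sum2[of f "a+b" c] sum2[of f a b] by (simp add: ac_simps)

lemma blk_mult3:
  assumes A: "A \<in> carrier_mat n m" and B: "B \<in> carrier_mat m p" and m: "m = a + b + c"
    and r: "r + nr \<le> n" and s: "s + ns \<le> p"
  shows "blk (A * B) r nr s ns = blk A r nr 0 a * blk B 0 a s ns + blk A r nr a b * blk B a b s ns
     + blk A r nr (a+b) c * blk B (a+b) c s ns"
proof (rule eq_matI)
  fix i j assume i: "i < dim_row (blk A r nr 0 a * blk B 0 a s ns + blk A r nr a b * blk B a b s ns
     + blk A r nr (a+b) c * blk B (a+b) c s ns)" and j: "j < dim_col (blk A r nr 0 a * blk B 0 a s ns + blk A r nr a b * blk B a b s ns
     + blk A r nr (a+b) c * blk B (a+b) c s ns)"
  then have i: "i < nr" and j: "j < ns" by auto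
  have "(A * B) $$ (i + r, j + s) = (\<Sum>k<a+b+c. A $$ (i+r, k) * B $$ (k, j+s))"
    using A B m i j r s by (auto simp: scalar_prod_def intro!: sum.cong)
  also have "\<dots> = (\<Sum>k<a. A $$ (i+r, k) * B $$ (k, j+s)) + (\<Sum>k<b. A $$ (i+r, k+a) * B $$ (k+a, j+s))
     + (\<Sum>k<c. A $$ (i+r, k+(a+b)) * B $$ (k+(a+b), j+s))" by (rule sum3)
  finally show "blk (A * B) r nr s ns $$ (i, j) = (blk A r nr 0 a * blk B 0 a s ns + blk A r nr a b * blk B a b s ns
     + blk A r nr (a+b) c * blk B (a+b) c s ns) $$ (i, j)"
    using i j by (simp add: scalar_prod_def lessThan_atLeast0)
qed auto


lemma assoc'[simp]: fixes A :: "'a::semiring_0 mat"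
  shows "dim_col A = dim_row B \<Longrightarrow> dim_col B = dim_row C \<Longrightarrow> A * B * C = A * (B * C)"
  by (rule assoc_mult_mat[of A "dim_row A" "dim_col A" B "dim_col B" C "dim_col C"], auto)
lemma distL': fixes A :: "'a::semiring_0 mat"
  shows "dim_col A = dim_row B \<Longrightarrow> dim_row C = dim_row B \<Longrightarrow> dim_col C = dim_col B \<Longrightarrow> A * (B + C) = A * B + A * C"
  by (rule mult_add_distrib_mat[of A "dim_row A" "dim_col A" B "dim_col B"], auto)
lemma distR': fixes A :: "'a::semiring_0 mat"
  shows "dim_row B = dim_row A \<Longrightarrow> dim_col B = dim_col A \<Longrightarrow> dim_col A = dim_row C \<Longrightarrow> (A + B) * C = A * C + B * C"
  by (rule add_mult_distrib_mat[of A "dim_row A" "dim_col A" B C "dim_col C"], auto)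
lemma distLm': fixes A :: "'a::ring mat"
  shows "dim_col A = dim_row B \<Longrightarrow> dim_row C = dim_row B \<Longrightarrow> dim_col C = dim_col B \<Longrightarrow> A * (B - C) = A * B - A * C"
  by (rule mult_minus_distrib_mat[of A "dim_row A" "dim_col A" B "dim_col B"], auto)
lemma distRm': fixes A :: "'a::ring mat"
  shows "dim_row B = dim_row A \<Longrightarrow> dim_col B = dim_col A \<Longrightarrow> dim_col A = dim_row C \<Longrightarrow> (A - B) * C = A * C - B * C"
  by (rule minus_mult_distrib_mat[of A "dim_row A" "dim_col A" B C "dim_col C"], auto)
lemmas dists = distL' distR' distLm' distRm'

lemma add_zero_eq: fixes X :: "'a::ab_group_add mat"
  assumes "X \<in> carrier_mat n m" "Y \<in> carrier_mat n m" "X + Y = 0\<^sub>m n m"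
  shows "Y = - X"
proof (rule eq_matI)
  fix i j assume ij: "i < dim_row (- X)" "j < dim_col (- X)"
  have "X $$ (i,j) + Y $$ (i,j) = 0"
  proof -
    have "(X + Y) $$ (i,j) = 0\<^sub>m n m $$ (i,j)" using assms(3) by simp
    then show ?thesis using assms(1,2) ij by (simp add: carrier_matD)
  qed
  then show "Y $$ (i,j) = (- X) $$ (i,j)" using ij assms by (simp add: eq_neg_iff_add_eq_0 add.commute)
qed (insert assms, auto)

lemma schur_solve:
  fixes WTT WIT WRT YIT P YIR YRT YRI Bm Bi Si :: "'a::field mat"
  assumes c: "WTT \<in> carrier_mat nT nT" "WIT \<in> carrier_mat nI nT" "WRT \<in> carrier_mat nR nT"
    "YIT \<in> carrier_mat nI nT" "P \<in> carrier_mat nI nI" "YIR \<in> carrier_mat nI nR"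
    "YRT \<in> carrier_mat nR nT" "YRI \<in> carrier_mat nR nI" "Bm \<in> carrier_mat nR nR"
    "Bi \<in> carrier_mat nR nR" "Si \<in> carrier_mat nI nI"
  and BiB: "Bi * Bm = 1\<^sub>m nR" and SiS: "Si * (P - YIR*Bi*YRI) = 1\<^sub>m nI"
  and E1: "YIT*WTT + P*WIT + YIR*WRT = 0\<^sub>m nI nT"
  and E2: "YRT*WTT + YRI*WIT + Bm*WRT = 0\<^sub>m nR nT"
  shows "WIT = - (Si * (YIT - YIR*Bi*YRT)) * WTT"
    "WRT = Bi*(-YRT + YRI*Si*(YIT - YIR*Bi*YRT)) * WTT"
proof -
  note d = c[THEN carrier_matD(1)] c[THEN carrier_matD(2)]
  define Q where "Q = YRT*WTT + YRI*WIT"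
  have Qc: "Q \<in> carrier_mat nR nT" using c unfolding Q_def by auto
  have "Bi * (Q + Bm*WRT) = 0\<^sub>m nR nT" using E2 c unfolding Q_def by simp
  moreover have "Bi * (Q + Bm*WRT) = Bi*Q + WRT"
    using c Qc by (simp add: mult_add_distrib_mat[of Bi nR nR] BiB flip: assoc_mult_mat[of Bi nR nR Bm nR WRT nT])
  ultimately have a: "WRT = - (Bi*Q)" using c Qc by (intro add_zero_eq[of _ nR nT]) auto
  define S where "S = P - YIR*Bi*YRI"
  define G where "G = YIT - YIR*Bi*YRT"
  have Sc: "S \<in> carrier_mat nI nI" and Gc: "G \<in> carrier_mat nI nT" using c unfolding S_def G_def by auto
  have h1: "S*WIT = P*WIT - YIR*(Bi*(YRI*WIT))" unfolding S_def using c
    using d by (simp add: dists)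
  have h2: "G*WTT = YIT*WTT - YIR*(Bi*(YRT*WTT))" unfolding G_def using c
    using d by (simp add: dists)
  have h3: "YIR*WRT = - (YIR*(Bi*(YRT*WTT))) - YIR*(Bi*(YRI*WIT))" unfolding a Q_def using d
    by (simp add: dists) (rule eq_matI, auto)
  have b: "S*WIT + G*WTT = 0\<^sub>m nI nT"
  proof (rule eq_matI)
    fix i j assume ij: "i < dim_row (0\<^sub>m nI nT :: 'a mat)" "j < dim_col (0\<^sub>m nI nT :: 'a mat)"
    have e1: "(YIT*WTT + P*WIT + YIR*WRT) $$ (i,j) = 0" using E1 ij by simp
    have e2: "(S*WIT) $$ (i,j) = (P*WIT - YIR*(Bi*(YRI*WIT))) $$ (i,j)" using h1 by simp
    have e3: "(G*WTT) $$ (i,j) = (YIT*WTT - YIR*(Bi*(YRT*WTT))) $$ (i,j)" using h2 by simp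
    have e4: "(YIR*WRT) $$ (i,j) = (- (YIR*(Bi*(YRT*WTT))) - YIR*(Bi*(YRI*WIT))) $$ (i,j)" using h3 by simp
    show "(S*WIT + G*WTT) $$ (i,j) = 0\<^sub>m nI nT $$ (i,j)"
      using e1 e2 e3 e4 ij c Sc Gc
      by (simp only: index_add_mat index_minus_mat index_uminus_mat index_zero_mat carrier_matD
           index_mult_mat(2,3) mult_carrier_mat) (simp add: algebra_simps)
  qed (insert c Sc Gc, auto)
  have SiS': "Si * S = 1\<^sub>m nI" using SiS unfolding S_def .
  have h4: "Si*(S*WIT) = WIT"
    by (subst assoc'[symmetric]) (use d Sc SiS' in auto)
  have h5: "Si*(S*WIT + G*WTT) = Si*(S*WIT) + Si*(G*WTT)"
    using d Sc Gc by (simp add: distL' carrier_matD)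
  have h6: "Si*(S*WIT + G*WTT) = 0\<^sub>m nI nT" using b c by simp
  have h7: "WIT + Si*(G*WTT) = 0\<^sub>m nI nT" using h4 h5 h6 by simp
  have "Si*(G*WTT) + WIT = 0\<^sub>m nI nT"
    using h7 comm_add_mat[of WIT nI nT "Si*(G*WTT)"] c Gc by simp
  then have cc: "WIT = - (Si*(G*WTT))" using c Gc by (intro add_zero_eq[of _ nI nT]) auto
  then show "WIT = - (Si * (YIT - YIR*Bi*YRT)) * WTT" unfolding G_def using d Gc
    by (simp add: carrier_matD)
  show "WRT = Bi*(-YRT + YRI*Si*(YIT - YIR*Bi*YRT)) * WTT"
    unfolding a Q_def cc G_def[symmetric] using d Gc
    by (simp add: dists carrier_matD) (rule eq_matI, auto)
qed


lemma blk_four: assumes "X1 \<in> carrier_mat n1 m1" "X2 \<in> carrier_mat n1 m2" "X3 \<in> carrier_mat n2 m1" "X4 \<in> carrier_mat n2 m2"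
  shows "blk (four_block_mat X1 X2 X3 X4) 0 n1 0 m1 = X1" "blk (four_block_mat X1 X2 X3 X4) 0 n1 m1 m2 = X2"
  by (rule eq_matI, insert assms, auto)+

lemma schur_inv:
  fixes P YIR YRI Bm Bi :: "'a::field mat"
  assumes c: "P \<in> carrier_mat nI nI" "YIR \<in> carrier_mat nI nR" "YRI \<in> carrier_mat nR nI"
    "Bm \<in> carrier_mat nR nR" "Bi \<in> carrier_mat nR nR"
  and BBi: "Bm * Bi = 1\<^sub>m nR" and Cinv: "invertible_mat (four_block_mat P YIR YRI Bm)"
  shows "invertible_mat (P - YIR*Bi*YRI)"
proof -
  note d = c[THEN carrier_matD(1)] c[THEN carrier_matD(2)]
  define C where "C = four_block_mat P YIR YRI Bm"
  have Cc: "C \<in> carrier_mat (nI+nR) (nI+nR)" unfolding C_def using c by auto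
  note Cp = minv_props[OF Cc Cinv[folded C_def]]
  obtain C1 C2 C3 C4 where sb: "split_block (minv C) nI nI = (C1,C2,C3,C4)" using prod_cases4 by blast
  note sp = split_block[OF sb, of nR nR] 
  have Cs: "C1 \<in> carrier_mat nI nI" "C2 \<in> carrier_mat nI nR" "C3 \<in> carrier_mat nR nI" "C4 \<in> carrier_mat nR nR"
    and Ceq: "minv C = four_block_mat C1 C2 C3 C4" using sp Cp(1) by auto
  have "four_block_mat C1 C2 C3 C4 * C = four_block_mat (C1 * P + C2 * YRI) (C1 * YIR + C2 * Bm)
    (C3 * P + C4 * YRI) (C3 * YIR + C4 * Bm)"
    unfolding C_def by (rule mult_four_block_mat[OF Cs c(1,2,3,4)])
  also have "four_block_mat C1 C2 C3 C4 * C = four_block_mat (1\<^sub>m nI) (0\<^sub>m nI nR) (0\<^sub>m nR nI) (1\<^sub>m nR)"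
    using Cp(3) Ceq by simp
  finally have F: "four_block_mat (1\<^sub>m nI) (0\<^sub>m nI nR) (0\<^sub>m nR nI) (1\<^sub>m nR) = four_block_mat (C1 * P + C2 * YRI) (C1 * YIR + C2 * Bm)
    (C3 * P + C4 * YRI) (C3 * YIR + C4 * Bm)" by simp
  have e1: "C1 * P + C2 * YRI = 1\<^sub>m nI"
  proof -
    have A: "blk (four_block_mat (1\<^sub>m nI) (0\<^sub>m nI nR) (0\<^sub>m nR nI) (1\<^sub>m nR)) 0 nI 0 nI = 1\<^sub>m nI"
      by (rule blk_four(1)) auto
    have B: "blk (four_block_mat (C1 * P + C2 * YRI) (C1 * YIR + C2 * Bm)
    (C3 * P + C4 * YRI) (C3 * YIR + C4 * Bm)) 0 nI 0 nI = C1 * P + C2 * YRI"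
      by (rule blk_four(1)) (use c Cs in auto)
    have H: "blk (four_block_mat (1\<^sub>m nI) (0\<^sub>m nI nR) (0\<^sub>m nR nI) (1\<^sub>m nR)) 0 nI 0 nI = blk (four_block_mat (C1 * P + C2 * YRI) (C1 * YIR + C2 * Bm)
    (C3 * P + C4 * YRI) (C3 * YIR + C4 * Bm)) 0 nI 0 nI" using arg_cong[OF F, of "\<lambda>M. blk M 0 nI 0 nI"] by simp
    show ?thesis by (rule trans[OF trans[OF B[symmetric] H[symmetric]] A])
  qed
  have e2: "C1 * YIR + C2 * Bm = 0\<^sub>m nI nR"
  proof -
    have A: "blk (four_block_mat (1\<^sub>m nI) (0\<^sub>m nI nR) (0\<^sub>m nR nI) (1\<^sub>m nR)) 0 nI nI nR = 0\<^sub>m nI nR"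
      by (rule blk_four(2)) auto
    have B: "blk (four_block_mat (C1 * P + C2 * YRI) (C1 * YIR + C2 * Bm)
    (C3 * P + C4 * YRI) (C3 * YIR + C4 * Bm)) 0 nI nI nR = C1 * YIR + C2 * Bm"
      by (rule blk_four(2)) (use c Cs in auto)
    have H: "blk (four_block_mat (1\<^sub>m nI) (0\<^sub>m nI nR) (0\<^sub>m nR nI) (1\<^sub>m nR)) 0 nI nI nR = blk (four_block_mat (C1 * P + C2 * YRI) (C1 * YIR + C2 * Bm)
    (C3 * P + C4 * YRI) (C3 * YIR + C4 * Bm)) 0 nI nI nR" using arg_cong[OF F, of "\<lambda>M. blk M 0 nI nI nR"] by simp
    show ?thesis by (rule trans[OF trans[OF B[symmetric] H[symmetric]] A])
  qed
  note dC = Cs[THEN carrier_matD(1)] Cs[THEN carrier_matD(2)]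
  have "(C1 * YIR + C2 * Bm) * Bi = 0\<^sub>m nI nR" using e2 c by simp
  moreover have "(C1 * YIR + C2 * Bm) * Bi = C1 * YIR * Bi + C2"
    using d dC by (simp add: distR' BBi)
  ultimately have "C1 * YIR * Bi + C2 = 0\<^sub>m nI nR" by simp
  then have C2e: "C2 = - (C1 * YIR * Bi)" using c Cs by (intro add_zero_eq[of _ nI nR]) auto
  have "C1 * (P - YIR*Bi*YRI) = C1 * P + C2 * YRI"
    unfolding C2e using d dC by (simp add: dists) (rule eq_matI, auto)
  then have "C1 * (P - YIR*Bi*YRI) = 1\<^sub>m nI" using e1 by simp
  moreover have "P - YIR*Bi*YRI \<in> carrier_mat nI nI" using c by auto
  ultimately show ?thesis using left_inv(1)[of "P - YIR*Bi*YRI" nI C1] Cs by blast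
qed


lemma diag3_four: "diag_block_mat [A,B,C] = four_block_mat A (0\<^sub>m (dim_row A) (dim_col B + dim_col C))
   (0\<^sub>m (dim_row B + dim_row C) (dim_col A))
   (four_block_mat B (0\<^sub>m (dim_row B) (dim_col C)) (0\<^sub>m (dim_row C) (dim_col B)) C)"
  apply (subst diag_block_mat.simps(2), subst diag_block_mat.simps(2), subst diag_block_mat_singleton)
  by (simp add: Let_def)

lemma diag3_carrier: assumes "A \<in> carrier_mat a a" "B \<in> carrier_mat b b" "C \<in> carrier_mat c c"
  shows "diag_block_mat [A,B,C] \<in> carrier_mat (a+b+c) (a+b+c)"
  unfolding diag3_four using assms by (auto simp: carrier_matD)

lemma four_diag_mult: fixes A :: "'a::semiring_1 mat"
  assumes "A \<in> carrier_mat a a" "A' \<in> carrier_mat a a" "D \<in> carrier_mat d d" "D' \<in> carrier_mat d d"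
  shows "four_block_mat A (0\<^sub>m a d) (0\<^sub>m d a) D * four_block_mat A' (0\<^sub>m a d) (0\<^sub>m d a) D'
     = four_block_mat (A*A') (0\<^sub>m a d) (0\<^sub>m d a) (D*D')"
  using mult_four_block_mat[OF assms(1) zero_carrier_mat zero_carrier_mat assms(3) assms(2) zero_carrier_mat zero_carrier_mat assms(4)]
    assms by simp

lemma diag3_one: fixes A :: "'a::semiring_1 mat"
  assumes "A \<in> carrier_mat a a" "B \<in> carrier_mat b b" "C \<in> carrier_mat c c"
    "A' \<in> carrier_mat a a" "B' \<in> carrier_mat b b" "C' \<in> carrier_mat c c"
    "A * A' = 1\<^sub>m a" "B * B' = 1\<^sub>m b" "C * C' = 1\<^sub>m c"
  shows "diag_block_mat [A,B,C] * diag_block_mat [A',B',C'] = 1\<^sub>m (a+b+c)"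
proof -
  have "diag_block_mat [A,B,C] * diag_block_mat [A',B',C'] =
     four_block_mat A (0\<^sub>m a (b+c)) (0\<^sub>m (b+c) a) (four_block_mat B (0\<^sub>m b c) (0\<^sub>m c b) C) *
     four_block_mat A' (0\<^sub>m a (b+c)) (0\<^sub>m (b+c) a) (four_block_mat B' (0\<^sub>m b c) (0\<^sub>m c b) C')"
    unfolding diag3_four using assms(1-6) by (simp add: carrier_matD)
  also have "\<dots> = four_block_mat (A*A') (0\<^sub>m a (b+c)) (0\<^sub>m (b+c) a)
      (four_block_mat B (0\<^sub>m b c) (0\<^sub>m c b) C * four_block_mat B' (0\<^sub>m b c) (0\<^sub>m c b) C')"
    by (rule four_diag_mult) (use assms in auto)
  also have "four_block_mat B (0\<^sub>m b c) (0\<^sub>m c b) C * four_block_mat B' (0\<^sub>m b c) (0\<^sub>m c b) C'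
     = four_block_mat (B*B') (0\<^sub>m b c) (0\<^sub>m c b) (C*C')"
    by (rule four_diag_mult) (use assms in auto)
  finally show ?thesis using assms(7-9) by (simp add: add.assoc)
qed

lemma diag3_blk: assumes "A \<in> carrier_mat a a" "B \<in> carrier_mat b b" "C \<in> carrier_mat c c"
  and D: "D = diag_block_mat [A,B,C]"
  shows "blk D 0 a 0 a = A" "blk D a b 0 a = 0\<^sub>m b a" "blk D (a+b) c 0 a = 0\<^sub>m c a"
    "blk D a b a b = B" "blk D a b (a+b) c = 0\<^sub>m b c" "blk D (a+b) c a b = 0\<^sub>m c b"
    "blk D (a+b) c (a+b) c = C"
  unfolding D diag3_four using assms by (auto intro!: eq_matI simp: carrier_matD)

theorem mainTheorem4:
  fixes NT NI NR :: nat
    and Z ZT ZI ZR :: "complex mat"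
  defines "N \<equiv> NT + NI + NR"
  defines "Z0 \<equiv> diag_block_mat [ZT, ZI, ZR]"
  defines "Y \<equiv> minv Z"
  defines "YT \<equiv> minv ZT"
  defines "YI \<equiv> minv ZI"
  defines "YR \<equiv> minv ZR"
  defines "YTT \<equiv> blk Y 0 NT 0 NT" and "YTI \<equiv> blk Y 0 NT NT NI" and "YTR \<equiv> blk Y 0 NT (NT + NI) NR"
  defines "YIT \<equiv> blk Y NT NI 0 NT" and "YII \<equiv> blk Y NT NI NT NI" and "YIR \<equiv> blk Y NT NI (NT + NI) NR"
  defines "YRT \<equiv> blk Y (NT + NI) NR 0 NT" and "YRI \<equiv> blk Y (NT + NI) NR NT NI"
    and "YRR \<equiv> blk Y (NT + NI) NR (NT + NI) NR"
  defines "Zt \<equiv> minv (1\<^sub>m N + Z0 * minv Z)"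
  defines "ZtTT \<equiv> blk Zt 0 NT 0 NT" and "ZtRT \<equiv> blk Zt (NT + NI) NR 0 NT"
  assumes Z: "Z \<in> carrier_mat N N" and Zinv: "invertible_mat Z"
    and ZT: "ZT \<in> carrier_mat NT NT" and ZTdiag: "diagonal_mat ZT" and ZTinv: "invertible_mat ZT"
    and ZI: "ZI \<in> carrier_mat NI NI" and ZIinv: "invertible_mat ZI"
    and ZR: "ZR \<in> carrier_mat NR NR" and ZRdiag: "diagonal_mat ZR" and ZRinv: "invertible_mat ZR"
    and Ainv: "invertible_mat (1\<^sub>m N + Z0 * minv Z)"
    and Binv: "invertible_mat (YR + YRR)"
    and Cinv: "invertible_mat (four_block_mat (YI + YII) YIR YRI (YR + YRR))"
  shows "invertible_mat ZtTT
    \<and> invertible_mat (YI + YII - YIR * minv (YR + YRR) * YRI)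
    \<and> ZtRT * minv ZtTT =
        minv (YR + YRR) *
          (- YRT + YRI * minv (YI + YII - YIR * minv (YR + YRR) * YRI)
                       * (YIT - YIR * minv (YR + YRR) * YRT))"
proof -
  have N: "N = NT + NI + NR" unfolding N_def ..
  note Yp = minv_props[OF Z Zinv, folded Y_def]
  note YTp = minv_props[OF ZT ZTinv, folded YT_def]
  note YIp = minv_props[OF ZI ZIinv, folded YI_def]
  note YRp = minv_props[OF ZR ZRinv, folded YR_def]
  define Y0 where "Y0 = diag_block_mat [YT, YI, YR]"
  have Z0c: "Z0 \<in> carrier_mat N N" unfolding Z0_def N by (rule diag3_carrier[OF ZT ZI ZR])
  have Y0c: "Y0 \<in> carrier_mat N N" unfolding Y0_def N by (rule diag3_carrier[OF YTp(1) YIp(1) YRp(1)])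
  have Z0Y0: "Z0 * Y0 = 1\<^sub>m N" unfolding Z0_def Y0_def N
    by (rule diag3_one[OF ZT ZI ZR YTp(1) YIp(1) YRp(1) YTp(2) YIp(2) YRp(2)])
  have Y0Z0: "Y0 * Z0 = 1\<^sub>m N" unfolding Z0_def Y0_def N
    by (rule diag3_one[OF YTp(1) YIp(1) YRp(1) ZT ZI ZR YTp(3) YIp(3) YRp(3)])
  define Am where "Am = 1\<^sub>m N + Z0 * Y"
  have Amc: "Am \<in> carrier_mat N N" unfolding Am_def using Z0c Yp by auto
  have Ainv': "invertible_mat Am" using Ainv unfolding Am_def Y_def .
  note Zp = minv_props[OF Amc Ainv']
  have Zt: "Zt = minv Am" unfolding Zt_def Am_def Y_def ..
  have Ztc: "Zt \<in> carrier_mat N N" using Zp Zt by simp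
  define M where "M = Y0 + Y"
  define W where "W = Zt * Z0"
  have Mc: "M \<in> carrier_mat N N" unfolding M_def using Y0c Yp by auto
  have Wc: "W \<in> carrier_mat N N" unfolding W_def using Ztc Z0c by auto
  have Y0Am: "Y0 * Am = M"
  proof -
    have "Y0 * Am = Y0 * 1\<^sub>m N + Y0 * (Z0 * Y)" unfolding Am_def
      using mult_add_distrib_mat[OF Y0c one_carrier_mat mult_carrier_mat[OF Z0c Yp(1)]] .
    also have "Y0 * (Z0 * Y) = (Y0 * Z0) * Y" using Y0c Z0c Yp by simp
    finally show ?thesis unfolding M_def using Y0Z0 Y0c Yp by simp
  qed
  have MW: "M * W = 1\<^sub>m N"
  proof -
    have "M * W = (Y0 * Am) * (Zt * Z0)" unfolding Y0Am W_def ..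
    also have "\<dots> = Y0 * ((Am * Zt) * Z0)" using Y0c Amc Ztc Z0c by simp
    also have "\<dots> = 1\<^sub>m N" using Zp(2) Zt Y0Z0 Z0c by simp
    finally show ?thesis .
  qed
  have WY0: "W * Y0 = Zt" unfolding W_def using Ztc Z0c Y0c Z0Y0 by simp
  define WTT where "WTT = blk W 0 NT 0 NT"
  define WIT where "WIT = blk W NT NI 0 NT"
  define WRT where "WRT = blk W (NT+NI) NR 0 NT"
  have Wcs: "WTT \<in> carrier_mat NT NT" "WIT \<in> carrier_mat NI NT" "WRT \<in> carrier_mat NR NT"
    unfolding WTT_def WIT_def WRT_def by auto
  note Y0b = diag3_blk[OF YTp(1) YIp(1) YRp(1) Y0_def]
  have Mb: "blk M NT NI 0 NT = YIT" "blk M NT NI NT NI = YI + YII" "blk M NT NI (NT+NI) NR = YIR"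
    "blk M (NT+NI) NR 0 NT = YRT" "blk M (NT+NI) NR NT NI = YRI" "blk M (NT+NI) NR (NT+NI) NR = YR + YRR"
    unfolding M_def YIT_def YII_def YIR_def YRT_def YRI_def YRR_def
    using blk_add[OF Y0c Yp(1)] Y0b N by auto
  have E0: "blk M 0 NT 0 NT * WTT + blk M 0 NT NT NI * WIT + blk M 0 NT (NT+NI) NR * WRT = 1\<^sub>m NT"
  proof -
    have "blk (M*W) 0 NT 0 NT = blk M 0 NT 0 NT * WTT + blk M 0 NT NT NI * WIT + blk M 0 NT (NT+NI) NR * WRT"
      unfolding WTT_def WIT_def WRT_def by (rule blk_mult3[OF Mc Wc N]) (auto simp: N)
    moreover have "blk (M*W) 0 NT 0 NT = 1\<^sub>m NT" unfolding MW by (rule blk_one_diag) (simp add: N)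
    ultimately show ?thesis by (rule trans[OF sym])
  qed
  have E1: "YIT * WTT + (YI + YII) * WIT + YIR * WRT = 0\<^sub>m NI NT"
  proof -
    have "blk (M*W) NT NI 0 NT = blk M NT NI 0 NT * WTT + blk M NT NI NT NI * WIT + blk M NT NI (NT+NI) NR * WRT"
      unfolding WTT_def WIT_def WRT_def by (rule blk_mult3[OF Mc Wc N]) (auto simp: N)
    moreover have "blk (M*W) NT NI 0 NT = 0\<^sub>m NI NT" unfolding MW by (rule blk_one_off) (auto simp add: N)
    ultimately show ?thesis unfolding Mb by (rule trans[OF sym])
  qed
  have E2: "YRT * WTT + YRI * WIT + (YR + YRR) * WRT = 0\<^sub>m NR NT"
  proof -
    have "blk (M*W) (NT+NI) NR 0 NT = blk M (NT+NI) NR 0 NT * WTT + blk M (NT+NI) NR NT NI * WIT + blk M (NT+NI) NR (NT+NI) NR * WRT"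
      unfolding WTT_def WIT_def WRT_def by (rule blk_mult3[OF Mc Wc N]) (auto simp: N)
    moreover have "blk (M*W) (NT+NI) NR 0 NT = 0\<^sub>m NR NT" unfolding MW by (rule blk_one_off) (auto simp add: N)
    ultimately show ?thesis unfolding Mb by (rule trans[OF sym])
  qed
  have ZtTT: "ZtTT = WTT * YT"
    using blk_mult3[OF Wc Y0c N, of 0 NT 0 NT] WY0 Y0b N Wcs YTp(1)
    unfolding WTT_def ZtTT_def by simp
  have ZtRT: "ZtRT = WRT * YT"
    using blk_mult3[OF Wc Y0c N, of "NT+NI" NR 0 NT] WY0 Y0b N Wcs YTp(1)
    unfolding WRT_def ZtRT_def by simp
  have Yblk: "YIT \<in> carrier_mat NI NT" "YIR \<in> carrier_mat NI NR" "YRT \<in> carrier_mat NR NT"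
    "YRI \<in> carrier_mat NR NI" "YII \<in> carrier_mat NI NI" "YRR \<in> carrier_mat NR NR"
    unfolding YIT_def YIR_def YRT_def YRI_def YII_def YRR_def by auto
  define Bm where "Bm = YR + YRR"
  have Bmc: "Bm \<in> carrier_mat NR NR" unfolding Bm_def using YRp(1) Yblk by auto
  note Bp = minv_props[OF Bmc Binv[folded Bm_def]]
  define Bi where "Bi = minv Bm"
  have Bic: "Bi \<in> carrier_mat NR NR" unfolding Bi_def using Bp by simp
  define P where "P = YI + YII"
  have Pc: "P \<in> carrier_mat NI NI" unfolding P_def using YIp(1) Yblk by auto
  have Sinv: "invertible_mat (P - YIR*Bi*YRI)"
    by (rule schur_inv[OF Pc Yblk(2) Yblk(4) Bmc Bic]) (use Bp Cinv in \<open>simp_all add: Bi_def Bm_def P_def\<close>)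
  define S where "S = P - YIR*Bi*YRI"
  have Sc: "S \<in> carrier_mat NI NI" unfolding S_def using Pc Bic Yblk by auto
  note Sp = minv_props[OF Sc Sinv[folded S_def]]
  define Si where "Si = minv S"
  have Sic: "Si \<in> carrier_mat NI NI" unfolding Si_def using Sp by simp
  have SiS: "Si * (P - YIR*Bi*YRI) = 1\<^sub>m NI" using Sp unfolding Si_def S_def by simp
  note sol = schur_solve[OF Wcs(1,2,3) Yblk(1) Pc Yblk(2) Yblk(3) Yblk(4) Bmc Bic Sic
      Bp(3)[folded Bi_def] SiS E1[folded P_def] E2[folded Bm_def]]
  define K1 where "K1 = - (Si * (YIT - YIR*Bi*YRT))"
  define Phi where "Phi = Bi*(-YRT + YRI*Si*(YIT - YIR*Bi*YRT))"
  have K1c: "K1 \<in> carrier_mat NI NT" unfolding K1_def using Sic Bic Yblk by auto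
  have Phic: "Phi \<in> carrier_mat NR NT" unfolding Phi_def using Sic Bic Yblk by auto
  have WIT: "WIT = K1 * WTT" and WRT: "WRT = Phi * WTT" using sol unfolding K1_def Phi_def by auto
  define L0 where "L0 = blk M 0 NT 0 NT + blk M 0 NT NT NI * K1 + blk M 0 NT (NT+NI) NR * Phi"
  have L0c: "L0 \<in> carrier_mat NT NT" unfolding L0_def using K1c Phic by auto
  have L0W: "L0 * WTT = 1\<^sub>m NT"
  proof -
    have "L0 * WTT = blk M 0 NT 0 NT * WTT + blk M 0 NT NT NI * WIT + blk M 0 NT (NT+NI) NR * WRT"
      unfolding L0_def WIT WRT using K1c Phic Wcs
      by (simp add: dists carrier_matD)
    then show ?thesis using E0 by simp
  qed
  have WL0: "WTT * L0 = 1\<^sub>m NT" by (rule mat_mult_left_right_inverse[OF L0c Wcs(1) L0W])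
  have ZtTTc: "ZtTT \<in> carrier_mat NT NT" unfolding ZtTT_def by simp
  have LZ: "(ZT * L0) * ZtTT = 1\<^sub>m NT"
  proof -
    have "(ZT * L0) * ZtTT = ZT * ((L0 * WTT) * YT)" unfolding ZtTT using ZT L0c Wcs YTp(1) by simp
    also have "\<dots> = 1\<^sub>m NT" using L0W YTp(2) ZT YTp(1) by simp
    finally show ?thesis .
  qed
  note li = left_inv[OF ZtTTc _ LZ]
  have inv1: "invertible_mat ZtTT" and mZ: "minv ZtTT = ZT * L0" using li ZT L0c by auto
  have fin: "ZtRT * minv ZtTT = Phi"
  proof -
    have "ZtRT * minv ZtTT = Phi * (WTT * ((YT * ZT) * L0))"
      unfolding mZ ZtRT WRT using Phic Wcs YTp(1) ZT L0c by simp
    also have "\<dots> = Phi" using YTp(3) WL0 L0c Phic by simp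
    finally show ?thesis .
  qed
  show ?thesis using inv1 Sinv fin unfolding Phi_def Si_def S_def Bi_def Bm_def P_def by simp
qed

end
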